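(* Let $\mathcal{F}$ be the linear operator on $A(D)$ given by \[ \mathcal{F}\Big(\sum_{n\ge0}a_nz^n\Big)=\sum_{n\ge0}a_nz^{2n}+\sum_{k\ge0}a_{3k+2}z^{2k+1}. \] Then $\mathcal{F}\in\mathcal{L}(A(D))$ (continuous for the topology of uniform convergence on compact subsets), $\mathcal{F}$ is injective on $A(D)$ and has closed range in $A(D)$. Furthermore, $\mathcal{F}$ maps $H^2(D)$ into itself, $\mathcal{F}\in\mathcal{L}(H^2(D))$ with $\|\mathcal{F}\|_{\mathcal{L}(H^2(D))}\le\sqrt2$, and $\mathcal{F}$ is expansive in $H^2(D)$: $\|f\|_{H^2(D)}\le\|\mathcal{F}f\|_{H^2(D)}$ for all $f\in H^2(D)$.
   Context: $D$ is the open unit disk, $A(D)$ the space of holomorphic functions on $D$ with the topology of uniform convergence on compact subsets, and $H^2(D)$ the Hardy space with $\|f\|_{H^2(D)}^2=\sup_{0\le r<1}\frac1{2\pi}\int_0^{2\pi}|f(re^{i\phi})|^2d\phi$ (so $\|\sum a_nz^n\|^2=\sum|a_n|^2$). Equivalently, $\mathcal{F}g(z)=g(z^2)+\frac{z^{-1/3}}{3}\big(g(z^{2/3})+e^{2\pi i/3}g(z^{2/3}e^{2\pi i/3})+e^{4\pi i/3}g(z^{2/3}e^{4\pi i/3})\big)$, and $\mathcal{F}(\sum a_nz^n)=\sum a_{T(n)}z^n$ where $T$ is the Collatz map $T(n)=\frac{3n+1}2$ ($n$ odd), $T(n)=\frac n2$ ($n$ even). *)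

theory Defs
  imports "HOL-Complex_Analysis.Complex_Analysis"
begin

abbreviation unit_disk :: "complex set" where
  "unit_disk \<equiv> ball 0 1"

definition taylor_coeff :: "(complex \<Rightarrow> complex) \<Rightarrow> nat \<Rightarrow> complex" where
  "taylor_coeff f n = (deriv ^^ n) f 0 / of_nat (fact n)"

definition collatz_op :: "(complex \<Rightarrow> complex) \<Rightarrow> (complex \<Rightarrow> complex)" where
  "collatz_op f = (\<lambda>z. (\<Sum>n. taylor_coeff f n * z ^ (2 * n))
                      + (\<Sum>k. taylor_coeff f (3 * k + 2) * z ^ (2 * k + 1)))"

text \<open>Locally uniform convergence on D (topology of A(D)).\<close>
definition loc_unif_conv :: "(nat \<Rightarrow> complex \<Rightarrow> complex) \<Rightarrow> (complex \<Rightarrow> complex) \<Rightarrow> bool" where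
  "loc_unif_conv fs f \<longleftrightarrow>
     (\<forall>K. compact K \<and> K \<subseteq> unit_disk \<longrightarrow> uniform_limit K fs f sequentially)"

definition circle_mean2 :: "(complex \<Rightarrow> complex) \<Rightarrow> real \<Rightarrow> real" where
  "circle_mean2 f r = (1 / (2 * pi)) * integral {0..2*pi} (\<lambda>\<phi>. (cmod (f (of_real r * cis \<phi>)))\<^sup>2)"

definition in_H2 :: "(complex \<Rightarrow> complex) \<Rightarrow> bool" where
  "in_H2 f \<longleftrightarrow> f holomorphic_on unit_disk \<and> bdd_above (circle_mean2 f ` {0..<1})"

definition H2_norm :: "(complex \<Rightarrow> complex) \<Rightarrow> real" where
  "H2_norm f = sqrt (SUP r\<in>{0..<1}. circle_mean2 f r)"

end

theory Submission
  imports Defs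
begin


lemma int_cis:
  fixes k :: int
  shows "((\<lambda>t. cis (of_int k * t)) has_integral (if k = 0 then complex_of_real (2*pi) else 0)) {0..2*pi}"
proof (cases "k = 0")
  case True
  then show ?thesis using has_integral_const_real[of "1::complex" 0 "2*pi"]
    by (simp add: scaleR_conv_of_real)
next
  case False
  let ?F = "\<lambda>t. cis (of_int k * t) / (\<i> * of_int k)"
  have d: "(?F has_vector_derivative cis (of_int k * t)) (at t within {0..2*pi})" for t
  proof -
    have "((\<lambda>t. cis (of_int k * t)) has_derivative (\<lambda>h. (of_int k * h) *\<^sub>R (\<i> * cis (of_int k * t)))) (at t within {0..2*pi})"
      by (intro has_derivative_cis derivative_eq_intros) auto
    then have "((\<lambda>t. cis (of_int k * t)) has_vector_derivative (of_int k *\<^sub>R (\<i> * cis (of_int k * t)))) (at t within {0..2*pi})"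
      by (simp add: has_vector_derivative_def scaleR_scaleR mult.commute)
    then have "(?F has_vector_derivative (of_int k *\<^sub>R (\<i> * cis (of_int k * t))) / (\<i> * of_int k)) (at t within {0..2*pi})"
      by (rule has_vector_derivative_divide)
    moreover have "(of_int k *\<^sub>R (\<i> * cis (of_int k * t))) / (\<i> * of_int k) = cis (of_int k * t)"
      using False by (simp add: scaleR_conv_of_real field_simps)
    ultimately show ?thesis by simp
  qed
  have "(?F (2*pi) - ?F 0) = 0"
  proof -
    have "cis (of_int k * (2*pi)) = 1"
      using cis_multiple_2pi[of "of_int k"] by (simp add: mult_ac)
    then show ?thesis by simp
  qed
  with fundamental_theorem_of_calculus[of 0 "2*pi" ?F "\<lambda>t. cis (of_int k * t)"] d False
  show ?thesis by simp
qed



lemma termwise_int: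
  fixes f :: "nat \<Rightarrow> real \<Rightarrow> complex"
  assumes ab: "a \<le> b"
    and bnd: "\<And>m t. t \<in> {a..b} \<Longrightarrow> norm (f m t) \<le> M m" and sM: "summable M"
    and cont: "\<And>m. continuous_on {a..b} (f m)"
    and int: "\<And>m. (f m has_integral A m) {a..b}"
  shows "A sums J \<Longrightarrow> ((\<lambda>t. \<Sum>m. f m t) has_integral J) {a..b}"
proof -
  assume AJ: "A sums J"
  have u: "uniform_limit {a..b} (\<lambda>N t. \<Sum>m<N. f m t) (\<lambda>t. \<Sum>m. f m t) sequentially"
    by (rule Weierstrass_m_test[OF bnd sM]) auto
  have c: "continuous_on {a..b} (\<lambda>t. \<Sum>m<N. f m t)" for N
    by (intro continuous_intros cont)
  obtain I K where I: "\<And>N. ((\<lambda>t. \<Sum>m<N. f m t) has_integral I N) {a..b}"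
     and K: "((\<lambda>t. \<Sum>m. f m t) has_integral K) {a..b}" and IK: "I \<longlonglongrightarrow> K"
    using uniform_limit_integral[OF u c] by auto
  have "I N = (\<Sum>m<N. A m)" for N
    using has_integral_unique[OF I[of N] has_integral_sum[of "{..<N}" f A]] int by auto
  then have "I = (\<lambda>N. \<Sum>m<N. A m)" by auto
  then have "A sums K" using IK by (simp add: sums_def)
  then have "K = J" using AJ sums_unique2 by blast
  then show ?thesis using K by simp
qed

lemma parseval:
  fixes c :: "nat \<Rightarrow> complex" and r :: real
  assumes r: "0 \<le> r" and sm: "summable (\<lambda>n. norm (c n) * r^n)"
  shows "summable (\<lambda>n. (norm (c n))^2 * r^(2*n))"
    and "integral {0..2*pi} (\<lambda>t. (cmod (\<Sum>n. c n * (of_real r * cis t)^n))^2)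
          = 2*pi * (\<Sum>n. (norm (c n))^2 * r^(2*n))"
proof -
  define M where "M n = norm (c n) * r^n" for n
  define u where "u n t = c n * (of_real r * cis t)^n" for n t
  define H where "H t = (\<Sum>n. u n t)" for t
  define S where "S = suminf M"
  have nu: "norm (u n t) = M n" for n t
    using r by (simp add: u_def M_def norm_mult norm_power)
  have sM: "summable M" using sm by (simp add: M_def[abs_def])
  have su: "summable (\<lambda>n. u n t)" for t
    by (rule summable_norm_cancel) (use sM nu in simp)
  have M0: "0 \<le> M n" for n using r by (simp add: M_def)
  have HS: "norm (H t) \<le> S" for t
  proof -
    have "norm (H t) \<le> (\<Sum>n. norm (u n t))" unfolding H_def
      by (rule summable_norm) (use sM nu in simp)
    then show ?thesis using nu by (simp add: S_def)
  qed
  have ucis: "u n t = c n * of_real (r^n) * cis (real n * t)" for n t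
    by (simp add: u_def power_mult_distrib Complex.DeMoivre)
  have contu: "continuous_on {0..2*pi} (u n)" for n
    unfolding ucis[abs_def] by (intro continuous_intros)
  have contH: "continuous_on {0..2*pi} H"
  proof -
    have "uniform_limit {0..2*pi} (\<lambda>N t. \<Sum>m<N. u m t) H sequentially"
      unfolding H_def[abs_def] by (rule Weierstrass_m_test[OF _ sM]) (simp add: nu)
    then show ?thesis
      by (rule uniform_limit_theorem[rotated]) (auto intro!: always_eventually continuous_intros contu)
  qed
  have stepA: "((\<lambda>t. cnj (cis (real n * t)) * H t) has_integral (of_real (2*pi) * c n * of_real (r^n))) {0..2*pi}" for n
  proof -
    define f where "f m t = cnj (cis (real n * t)) * u m t" for m t
    define A where "A m = (if m = n then of_real (2*pi) * c n * of_real (r^n) else 0)" for m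
    have "((\<lambda>t. \<Sum>m. f m t) has_integral (of_real (2*pi) * c n * of_real (r^n))) {0..2*pi}"
    proof (rule termwise_int[where M=M and A=A])
      show "norm (f m t) \<le> M m" for m t by (simp add: f_def norm_mult nu)
      show "continuous_on {0..2*pi} (f m)" for m
        unfolding f_def by (intro continuous_intros contu)
      show "(f m has_integral A m) {0..2*pi}" for m
      proof -
        have fe: "f m t = (c m * of_real (r^m)) * cis (of_int (int m - int n) * t)" for t
          by (simp add: f_def ucis cis_cnj cis_mult algebra_simps)
        have "((\<lambda>t. (c m * of_real (r^m)) * cis (of_int (int m - int n) * t)) has_integral
              (c m * of_real (r^m)) * (if int m - int n = 0 then complex_of_real (2*pi) else 0)) {0..2*pi}"
          by (rule has_integral_mult_right[OF int_cis])
        then show ?thesis unfolding fe[abs_def] A_def by (auto simp: mult_ac)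
      qed
      show "A sums (of_real (2*pi) * c n * of_real (r^n))"
        unfolding A_def using sums_single[of n "\<lambda>_. of_real (2*pi) * c n * of_real (r^n)"] by simp
    qed (use sM in auto)
    moreover have "(\<Sum>m. f m t) = cnj (cis (real n * t)) * H t" for t
      unfolding f_def H_def by (rule suminf_mult[OF su])
    ultimately show ?thesis by simp
  qed
  define g where "g n t = u n t * cnj (H t)" for n t
  define a where "a n = complex_of_real (2*pi * ((norm (c n))^2 * r^(2*n)))" for n
  have ga: "(g n has_integral a n) {0..2*pi}" for n
  proof -
    have "((cnj \<circ> (\<lambda>t. cnj (cis (real n * t)) * H t)) has_integral cnj (of_real (2*pi) * c n * of_real (r^n))) {0..2*pi}"
      using stepA[of n] has_integral_cnj by blast
    then have "((\<lambda>t. (c n * of_real (r^n)) * cnj (cnj (cis (real n * t)) * H t)) has_integral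
        (c n * of_real (r^n)) * cnj (of_real (2*pi) * c n * of_real (r^n))) {0..2*pi}"
      by (intro has_integral_mult_right) (simp add: o_def)
    moreover have "(c n * of_real (r^n)) * cnj (cnj (cis (real n * t)) * H t) = g n t" for t
      by (simp add: g_def ucis)
    moreover have "(c n * of_real (r^n)) * cnj (of_real (2*pi) * c n * of_real (r^n)) = a n"
    proof -
      have "(c n * of_real (r^n)) * cnj (of_real (2*pi) * c n * of_real (r^n))
           = of_real (2*pi) * of_real (r^n * r^n) * (c n * cnj (c n))"
        by (simp add: algebra_simps)
      also have "\<dots> = a n"
        unfolding a_def complex_norm_square[symmetric]
        by (simp add: power_mult power2_eq_square mult_ac)
      finally show ?thesis .
    qed
    ultimately show ?thesis by simp
  qed
  have gint: "((\<lambda>t. \<Sum>n. g n t) has_integral (\<Sum>n. a n)) {0..2*pi}"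
      and asum: "summable a"
  proof -
    have "((\<lambda>t. \<Sum>n. g n t) has_integral J) {0..2*pi}" if "a sums J" for J
    proof (rule termwise_int[where M="\<lambda>n. M n * S" and A=a])
      show "norm (g m t) \<le> M m * S" for m t
        unfolding g_def norm_mult complex_mod_cnj nu by (rule mult_left_mono[OF HS M0])
      show "summable (\<lambda>n. M n * S)" by (rule summable_mult2[OF sM])
      show "continuous_on {0..2*pi} (g m)" for m
        unfolding g_def by (intro continuous_intros contu contH)
    qed (use ga that in auto)
    moreover have "summable a"
    proof -
      have "uniform_limit {0..2*pi} (\<lambda>N t. \<Sum>m<N. g m t) (\<lambda>t. \<Sum>m. g m t) sequentially"
        by (rule Weierstrass_m_test[where M="\<lambda>n. M n * S"])
           (auto simp: g_def norm_mult nu intro!: mult_left_mono HS M0 summable_mult2 sM)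
      moreover have "continuous_on {0..2*pi} (\<lambda>t. \<Sum>m<N. g m t)" for N
        unfolding g_def by (intro continuous_intros contu contH)
      ultimately obtain I K where I: "\<And>N. ((\<lambda>t. \<Sum>m<N. g m t) has_integral I N) {0..2*pi}"
         and IK: "I \<longlonglongrightarrow> K"
        using uniform_limit_integral by (metis ab_semigroup_add_class.add.commute sequentially_bot)
      have "I N = (\<Sum>m<N. a m)" for N
        using has_integral_unique[OF I[of N] has_integral_sum[of "{..<N}" g a]] ga by auto
      then have "I = (\<lambda>N. \<Sum>m<N. a m)" by auto
      then have "a sums K" using IK by (simp add: sums_def)
      then show ?thesis by (auto simp: summable_def)
    qed
    ultimately show "((\<lambda>t. \<Sum>n. g n t) has_integral (\<Sum>n. a n)) {0..2*pi}" "summable a"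
      using summable_sums by blast+
  qed
  show sr: "summable (\<lambda>n. (norm (c n))^2 * r^(2*n))"
  proof -
    have "summable (\<lambda>n. 2*pi * ((norm (c n))^2 * r^(2*n)))"
      using asum by (simp only: a_def[abs_def] summable_complex_of_real)
    then show ?thesis by (simp add: summable_cmult_iff)
  qed
  have "(\<Sum>n. g n t) = complex_of_real ((cmod (H t))^2)" for t
    unfolding g_def complex_norm_square by (rule suminf_mult2[OF su, symmetric, folded H_def])
  moreover have "(\<Sum>n. a n) = complex_of_real (2*pi * (\<Sum>n. (norm (c n))^2 * r^(2*n)))"
  proof -
    have "(\<Sum>n. a n) = complex_of_real (\<Sum>n. 2*pi*((norm (c n))^2 * r^(2*n)))"
      unfolding a_def by (rule suminf_of_real[OF summable_mult[OF sr], symmetric])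
    also have "\<dots> = complex_of_real (2*pi * (\<Sum>n. (norm (c n))^2 * r^(2*n)))"
      using suminf_mult[OF sr, of "2*pi"] by simp
    finally show ?thesis .
  qed
  ultimately have "((\<lambda>t. complex_of_real ((cmod (H t))^2)) has_integral complex_of_real (2*pi * (\<Sum>n. (norm (c n))^2 * r^(2*n)))) {0..2*pi}"
    using gint by simp
  from has_integral_Re[OF this]
  have "((\<lambda>t. (cmod (H t))^2) has_integral (2*pi * (\<Sum>n. (norm (c n))^2 * r^(2*n)))) {0..2*pi}"
    by simp
  then show "integral {0..2*pi} (\<lambda>t. (cmod (\<Sum>n. c n * (of_real r * cis t)^n))^2)
          = 2*pi * (\<Sum>n. (norm (c n))^2 * r^(2*n))"
    unfolding H_def u_def by (rule integral_unique)
qed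



definition oddpart :: "(complex \<Rightarrow> complex) \<Rightarrow> complex \<Rightarrow> complex" where
  "oddpart f z = (\<Sum>k. taylor_coeff f (3*k+2) * z^(2*k+1))"


lemma tc_series:
  assumes "f holomorphic_on unit_disk" "z \<in> unit_disk"
  shows "(\<lambda>n. taylor_coeff f n * z^n) sums f z"
  using holomorphic_power_series[OF assms] by (simp add: taylor_coeff_def)


lemma tc_bound:
  assumes f: "f holomorphic_on unit_disk" and r: "0 < r" "r < 1"
    and B: "\<And>x. norm x = r \<Longrightarrow> norm (f x) \<le> B"
  shows "norm (taylor_coeff f n) \<le> B / r^n"
proof -
  have sub: "cball 0 r \<subseteq> unit_disk" using r by auto
  have "norm ((deriv ^^ n) f 0) \<le> fact n * B / r^n"
  proof (rule Cauchy_inequality)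
    show "f holomorphic_on ball 0 r" using f by (rule holomorphic_on_subset) (use r in auto)
    show "continuous_on (cball 0 r) f"
      using holomorphic_on_imp_continuous_on[OF f] sub continuous_on_subset by blast
  qed (use r B in auto)
  then show ?thesis
    by (simp add: taylor_coeff_def norm_divide field_simps)
qed


lemma tc_diff:
  assumes "f holomorphic_on unit_disk" "g holomorphic_on unit_disk"
  shows "taylor_coeff (\<lambda>z. f z - g z) n = taylor_coeff f n - taylor_coeff g n"
  unfolding taylor_coeff_def
  by (simp add: higher_deriv_diff[OF assms] diff_divide_distrib)


lemma tc_abs:
  assumes f: "f holomorphic_on unit_disk" and z: "z \<in> unit_disk"
  shows "summable (\<lambda>n. norm (taylor_coeff f n) * norm z ^ n)"
proof -
  define x where "x = complex_of_real ((1 + norm z)/2)"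
  have nx: "norm x = (1 + norm z)/2" unfolding x_def norm_of_real by (simp add: abs_of_nonneg add_nonneg_nonneg)
  have "x \<in> unit_disk" using z nx by simp
  from tc_series[OF f this] have "summable (\<lambda>n. taylor_coeff f n * x^n)" by (rule sums_summable)
  from powser_insidea[OF this, of z] have "summable (\<lambda>n. norm (taylor_coeff f n * z ^ n))"
    using z nx by simp
  then show ?thesis by (simp add: norm_mult norm_power)
qed


lemma bound_exists:
  assumes f: "f holomorphic_on unit_disk" and r: "r < 1"
  shows "\<exists>B. \<forall>x. norm x \<le> r \<longrightarrow> norm (f x) \<le> B"
proof -
  have sub: "cball 0 r \<subseteq> unit_disk" using r by auto
  have "continuous_on (cball 0 r) f"
    by (rule continuous_on_subset[OF holomorphic_on_imp_continuous_on[OF f] sub])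
  then have "bounded (f ` cball 0 r)"
    by (intro compact_imp_bounded compact_continuous_image) auto
  then obtain B where "\<forall>y\<in>f ` cball 0 r. norm y \<le> B" by (auto simp: bounded_iff)
  then have "\<forall>x. norm x \<le> r \<longrightarrow> norm (f x) \<le> B" by auto
  then show ?thesis by blast
qed


lemma odd_term:
  assumes f: "f holomorphic_on unit_disk" and r: "0 < \<rho>" "\<rho> < 1"
    and B: "\<And>x. norm x = \<rho> \<Longrightarrow> norm (f x) \<le> B" and z: "norm z \<le> \<rho>^2"
  shows "norm (taylor_coeff f (3*k+2) * z^(2*k+1)) \<le> B * \<rho>^k"
proof -
  have B0: "0 \<le> B" using B[of "of_real \<rho>"] r by (auto intro: order_trans[OF norm_ge_zero])
  have "norm (taylor_coeff f (3*k+2) * z^(2*k+1)) = norm (taylor_coeff f (3*k+2)) * norm z^(2*k+1)"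
    by (simp add: norm_mult norm_power)
  also have "\<dots> \<le> (B / \<rho>^(3*k+2)) * (\<rho>^2)^(2*k+1)"
    by (intro mult_mono tc_bound[OF f r B] power_mono z) (use B0 r in auto)
  also have "\<dots> = B * \<rho>^k"
  proof -
    have "(\<rho>^2)^(2*k+1) = \<rho>^k * \<rho>^(3*k+2)"
      by (simp add: power_mult[symmetric] power_add[symmetric])
    then show ?thesis using r by simp
  qed
  finally show ?thesis .
qed


lemma odd_sum:
  assumes f: "f holomorphic_on unit_disk" and r: "0 < \<rho>" "\<rho> < 1"
    and B: "\<And>x. norm x = \<rho> \<Longrightarrow> norm (f x) \<le> B" and z: "norm z \<le> \<rho>^2"
  shows "summable (\<lambda>k. taylor_coeff f (3*k+2) * z^(2*k+1))"
    and "norm (oddpart f z) \<le> B / (1 - \<rho>)"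
proof -
  have sg: "summable (\<lambda>k. B * \<rho>^k)"
    using r by (intro summable_mult summable_geometric) auto
  have t: "norm (taylor_coeff f (3*k+2) * z^(2*k+1)) \<le> B * \<rho>^k" for k
    by (rule odd_term[OF f r B z])
  show s: "summable (\<lambda>k. taylor_coeff f (3*k+2) * z^(2*k+1))"
    by (rule summable_comparison_test[OF _ sg]) (use t in auto)
  have sn: "summable (\<lambda>k. norm (taylor_coeff f (3*k+2) * z^(2*k+1)))"
    by (rule summable_comparison_test[OF _ sg]) (use t in auto)
  have "norm (oddpart f z) \<le> (\<Sum>k. norm (taylor_coeff f (3*k+2) * z^(2*k+1)))"
    unfolding oddpart_def by (rule summable_norm[OF sn])
  also have "\<dots> \<le> (\<Sum>k. B * \<rho>^k)"
    by (rule suminf_le[OF t sn sg])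
  also have "\<dots> = B / (1 - \<rho>)"
    using suminf_mult[of "\<lambda>k. \<rho>^k" B] suminf_geometric[of \<rho>] r by simp
  finally show "norm (oddpart f z) \<le> B / (1 - \<rho>)" .
qed


lemma rho_choice:
  assumes "0 \<le> s" "s < 1"
  shows "0 < sqrt ((1+s)/2) \<and> sqrt ((1+s)/2) < 1 \<and> s \<le> (sqrt ((1+s)/2))^2"
  using assms by auto


lemma odd_summable:
  assumes f: "f holomorphic_on unit_disk" and z: "norm z < 1"
  shows "summable (\<lambda>k. taylor_coeff f (3*k+2) * z^(2*k+1))"
proof -
  define \<rho> where "\<rho> = sqrt ((1 + norm z)/2)"
  have r: "0 < \<rho>" "\<rho> < 1" "norm z \<le> \<rho>^2" using rho_choice[of "norm z"] z by (auto simp: \<rho>_def)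
  obtain B where B: "\<And>x. norm x \<le> \<rho> \<Longrightarrow> norm (f x) \<le> B" using bound_exists[OF f r(2)] by auto
  show ?thesis by (rule odd_sum(1)[OF f r(1,2) _ r(3)]) (use B in auto)
qed


lemma collatz_split:
  assumes f: "f holomorphic_on unit_disk" and z: "z \<in> unit_disk"
  shows "collatz_op f z = f (z^2) + oddpart f z"
proof -
  have "z^2 \<in> unit_disk" using z by (simp add: norm_power power_less_one_iff abs_less_iff) 
  from tc_series[OF f this] have "(\<Sum>n. taylor_coeff f n * z^(2*n)) = f (z^2)"
    by (simp add: power_mult sums_iff)
  then show ?thesis by (simp add: collatz_op_def oddpart_def)
qed


lemma odd_neg:
  assumes f: "f holomorphic_on unit_disk" and z: "z \<in> unit_disk"
  shows "oddpart f (-z) = - oddpart f z"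
proof -
  have s: "summable (\<lambda>k. taylor_coeff f (3*k+2) * z^(2*k+1))" using odd_summable[OF f] z by simp
  have "oddpart f (-z) = (\<Sum>k. - (taylor_coeff f (3*k+2) * z^(2*k+1)))"
    unfolding oddpart_def by (simp add: power_minus_odd)
  also have "\<dots> = - oddpart f z" unfolding oddpart_def by (rule suminf_minus[OF s])
  finally show ?thesis .
qed


lemma holo_local:
  assumes "\<And>s. 0 < s \<Longrightarrow> s < 1 \<Longrightarrow> g holomorphic_on ball 0 s"
  shows "g holomorphic_on unit_disk"
  unfolding holomorphic_on_def
proof
  fix z :: complex assume z: "z \<in> unit_disk"
  define s where "s = (1 + norm z)/2"
  have nz: "0 \<le> norm z" "norm z < 1" using z by auto
  have s1a: "0 < s" unfolding s_def using nz by (simp add: add_pos_nonneg)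
  have s1b: "s < 1" unfolding s_def using nz by simp
  note s1 = s1a s1b
  have s: "0 < s" "s < 1" "z \<in> ball 0 s" using s1 nz by (simp_all add: s_def add_pos_nonneg)
  have "g field_differentiable at z"
    by (rule holomorphic_on_imp_differentiable_at[OF assms[OF s(1,2)]]) (use s in auto)
  then show "g field_differentiable at z within unit_disk"
    using field_differentiable_at_within by blast
qed


lemma odd_holo:
  assumes f: "f holomorphic_on unit_disk"
  shows "oddpart f holomorphic_on unit_disk"
proof (rule holo_local)
  fix s :: real assume s: "0 < s" "s < 1"
  define \<rho> where "\<rho> = sqrt s"
  have r: "0 < \<rho>" "\<rho> < 1" "\<rho>^2 = s" using s by (auto simp: \<rho>_def)
  obtain B where B: "\<And>x. norm x \<le> \<rho> \<Longrightarrow> norm (f x) \<le> B" using bound_exists[OF f r(2)] by auto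
  have sg: "summable (\<lambda>k. B * \<rho>^k)"
    using r by (intro summable_mult summable_geometric) auto
  have u: "uniform_limit (cball 0 s) (\<lambda>N z. \<Sum>k<N. taylor_coeff f (3*k+2) * z^(2*k+1)) (oddpart f) sequentially"
    unfolding oddpart_def[abs_def]
    by (rule Weierstrass_m_test[OF _ sg]) (rule odd_term[OF f r(1,2)], use B r in auto)
  obtain "oddpart f holomorphic_on ball 0 s"
    by (rule holomorphic_uniform_limit[OF _ u]) (auto intro!: always_eventually continuous_intros holomorphic_intros)
  then show "oddpart f holomorphic_on ball 0 s" .
qed


lemma sq_disk: "z \<in> unit_disk \<Longrightarrow> z^2 \<in> unit_disk"
proof -
  assume "z \<in> unit_disk"
  then have "norm z < 1" by simp
  then have "norm z ^ 2 < 1 ^ 2" by (intro power_strict_mono) auto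
  then show "z^2 \<in> unit_disk" by (simp add: norm_power)
qed

lemma part1:
  assumes f: "f holomorphic_on unit_disk"
  shows "collatz_op f holomorphic_on unit_disk"
proof -
  have "(f \<circ> (\<lambda>z. z^2)) holomorphic_on unit_disk"
    by (rule holomorphic_on_compose_gen[OF _ f]) (auto intro!: holomorphic_intros sq_disk)
  then have h1: "(\<lambda>z. f (z^2)) holomorphic_on unit_disk" by (simp add: o_def)
  have h2: "(\<lambda>z. f (z^2) + oddpart f z) holomorphic_on unit_disk"
    by (intro holomorphic_on_add h1 odd_holo[OF f])
  have "collatz_op f holomorphic_on unit_disk \<longleftrightarrow> (\<lambda>z. f (z^2) + oddpart f z) holomorphic_on unit_disk"
    by (rule holomorphic_cong) (simp_all add: collatz_split[OF f])
  then show ?thesis using h2 by simp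
qed




lemma compact_in_disk:
  assumes K: "compact K" "K \<subseteq> unit_disk"
  shows "\<exists>s. 0 < s \<and> s < 1 \<and> K \<subseteq> cball 0 s"
proof (cases "K = {}")
  case True then show ?thesis by (intro exI[of _ "1/2"]) auto
next
  case False
  have "compact (norm ` K)" by (intro compact_continuous_image continuous_intros K(1))
  moreover have "norm ` K \<noteq> {}" using False by simp
  ultimately obtain m where m: "m \<in> norm ` K" "\<forall>t\<in>norm ` K. t \<le> m"
    using compact_attains_sup by blast
  then have m1: "m < 1" using K(2) by auto
  define s where "s = max (1/2) m"
  have "K \<subseteq> cball 0 s"
  proof
    fix x assume "x \<in> K"
    then have "norm x \<le> m" using m by auto
    then show "x \<in> cball 0 s" by (simp add: s_def)
  qed
  moreover have "0 < s" "s < 1" using m1 by (auto simp: s_def)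
  ultimately show ?thesis by blast
qed

lemma odd_diff:
  assumes f: "f holomorphic_on unit_disk" and g: "g holomorphic_on unit_disk" and z: "z \<in> unit_disk"
  shows "oddpart (\<lambda>w. f w - g w) z = oddpart f z - oddpart g z"
proof -
  have sf: "summable (\<lambda>k. taylor_coeff f (3*k+2) * z^(2*k+1))" using odd_summable[OF f] z by simp
  have sg: "summable (\<lambda>k. taylor_coeff g (3*k+2) * z^(2*k+1))" using odd_summable[OF g] z by simp
  show ?thesis
    unfolding oddpart_def tc_diff[OF f g] left_diff_distrib
    by (rule suminf_diff[OF sf sg, symmetric])
qed

lemma part2:
  assumes fs: "\<And>n. fs n holomorphic_on unit_disk" and f: "f holomorphic_on unit_disk"
    and c: "loc_unif_conv fs f"
  shows "loc_unif_conv (\<lambda>n. collatz_op (fs n)) (collatz_op f)"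
  unfolding loc_unif_conv_def
proof (intro allI impI)
  fix K assume K: "compact K \<and> K \<subseteq> unit_disk"
  obtain s where s: "0 < s" "s < 1" "K \<subseteq> cball 0 s" using compact_in_disk K by blast
  define \<rho> where "\<rho> = sqrt s"
  have r: "0 < \<rho>" "\<rho> < 1" "\<rho>^2 = s" using s by (auto simp: \<rho>_def)
  have sr: "s \<le> \<rho>"
  proof -
    have "\<rho>^2 \<le> \<rho>^1" using r by (intro power_decreasing) auto
    then show ?thesis using r by simp
  qed
  have cb: "compact (cball (0::complex) \<rho>) \<and> cball 0 \<rho> \<subseteq> unit_disk" using r by (auto simp: compact_cball)
  have ul: "uniform_limit (cball 0 \<rho>) fs f sequentially"
    using c cb unfolding loc_unif_conv_def by blast
  define C where "C = 1 + 1/(1-\<rho>)"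
  have C: "0 < C" using r by (simp add: C_def add_pos_nonneg)
  show "uniform_limit K (\<lambda>n. collatz_op (fs n)) (collatz_op f) sequentially"
    unfolding uniform_limit_iff
  proof (intro allI impI)
    fix e :: real assume e: "0 < e"
    define \<epsilon> where "\<epsilon> = e / (2*C)"
    have \<epsilon>: "0 < \<epsilon>" using e C by (simp add: \<epsilon>_def)
    have \<epsilon>C: "\<epsilon> * C < e" using e C by (simp add: \<epsilon>_def)
    from ul[unfolded uniform_limit_iff, rule_format, OF \<epsilon>]
    have ev: "\<forall>\<^sub>F n in sequentially. \<forall>x\<in>cball 0 \<rho>. dist (fs n x) (f x) < \<epsilon>" .
    then show "\<forall>\<^sub>F n in sequentially. \<forall>z\<in>K. dist (collatz_op (fs n) z) (collatz_op f z) < e"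
    proof eventually_elim
      case (elim n)
      show ?case
      proof
        fix z assume zK: "z \<in> K"
        then have zs: "norm z \<le> s" using s by auto
        then have zD: "z \<in> unit_disk" using s by simp
        define h where "h = (\<lambda>w. fs n w - f w)"
        have hh: "h holomorphic_on unit_disk" unfolding h_def by (intro holomorphic_intros fs f)
        have hb: "norm (h x) \<le> \<epsilon>" if "norm x = \<rho>" for x
          using elim that by (auto simp: h_def dist_norm intro: less_imp_le)
        have "collatz_op (fs n) z - collatz_op f z = h (z^2) + oddpart h z"
          unfolding h_def collatz_split[OF fs zD] collatz_split[OF f zD] odd_diff[OF fs f zD]
          by simp
        moreover have "norm (h (z^2)) \<le> \<epsilon>"
        proof -
          have "norm z ^ 2 \<le> s ^ 2" using zs by (intro power_mono) auto
          also have "\<dots> \<le> s" using s by (simp add: power2_eq_square mult_left_le)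
          finally have "z^2 \<in> cball 0 \<rho>" using sr by (simp add: norm_power)
          then show ?thesis using elim by (auto simp: h_def dist_norm intro: less_imp_le)
        qed
        moreover have "norm (oddpart h z) \<le> \<epsilon> / (1 - \<rho>)"
          by (rule odd_sum(2)[OF hh r(1,2) hb]) (use zs r in auto)
        ultimately have "norm (collatz_op (fs n) z - collatz_op f z) \<le> \<epsilon> + \<epsilon> / (1 - \<rho>)"
          by (metis norm_triangle_mono)
        also have "\<dots> = \<epsilon> * C" by (simp add: C_def algebra_simps)
        finally show "dist (collatz_op (fs n) z) (collatz_op f z) < e"
          using \<epsilon>C by (simp add: dist_norm)
      qed
    qed
  qed
qed

lemma csqrt_disk:
  assumes "w \<in> unit_disk" shows "csqrt w \<in> unit_disk" "- csqrt w \<in> unit_disk"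
  using assms by auto

lemma even_recover:
  assumes h: "h holomorphic_on unit_disk" and w: "w \<in> unit_disk"
  shows "h w = (collatz_op h (csqrt w) + collatz_op h (- csqrt w)) / 2"
proof -
  have z: "csqrt w \<in> unit_disk" using csqrt_disk[OF w] by simp
  show ?thesis
    unfolding collatz_split[OF h z] collatz_split[OF h csqrt_disk(2)[OF w]] odd_neg[OF h z]
    by simp
qed

lemma part3:
  assumes f: "f holomorphic_on unit_disk" and g: "g holomorphic_on unit_disk"
    and eq: "\<forall>z\<in>unit_disk. collatz_op f z = collatz_op g z"
  shows "\<forall>z\<in>unit_disk. f z = g z"
proof
  fix w assume w: "w \<in> unit_disk"
  show "f w = g w"
    by (subst even_recover[OF f w], subst even_recover[OF g w])
       (simp add: eq[rule_format, OF csqrt_disk(1)[OF w]] eq[rule_format, OF csqrt_disk(2)[OF w]])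
qed

lemma part4:
  assumes fs: "\<And>n. fs n holomorphic_on unit_disk"
    and c: "loc_unif_conv (\<lambda>n. collatz_op (fs n)) g"
  shows "\<exists>f. f holomorphic_on unit_disk \<and> (\<forall>z\<in>unit_disk. collatz_op f z = g z)"
proof -
  define f where "f w = (g (csqrt w) + g (- csqrt w)) / 2" for w
  have ul: "uniform_limit (cball 0 s) fs f sequentially" if s: "0 < s" "s < 1" for s
  proof -
    define \<rho> where "\<rho> = sqrt s"
    have r: "0 < \<rho>" "\<rho> < 1" using s by (auto simp: \<rho>_def)
    have cb: "compact (cball (0::complex) \<rho>) \<and> cball 0 \<rho> \<subseteq> unit_disk" using r by (auto simp: compact_cball)
    have ulr: "uniform_limit (cball 0 \<rho>) (\<lambda>n. collatz_op (fs n)) g sequentially"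
      using c cb unfolding loc_unif_conv_def by blast
    show ?thesis unfolding uniform_limit_iff
    proof (intro allI impI)
      fix e :: real assume e: "0 < e"
      from ulr[unfolded uniform_limit_iff, rule_format, OF e]
      show "\<forall>\<^sub>F n in sequentially. \<forall>w\<in>cball 0 s. dist (fs n w) (f w) < e"
      proof eventually_elim
        case (elim n)
        show ?case
        proof
          fix w :: complex assume "w \<in> cball 0 s"
          then have ws: "norm w \<le> s" by simp
          then have wD: "w \<in> unit_disk" using s by simp
          have c1: "csqrt w \<in> cball 0 \<rho>" "- csqrt w \<in> cball 0 \<rho>"
            using ws by (auto simp: \<rho>_def)
          have d1: "norm (collatz_op (fs n) (csqrt w) - g (csqrt w)) < e"
            using elim c1 by (auto simp: dist_norm)
          have d2: "norm (collatz_op (fs n) (- csqrt w) - g (- csqrt w)) < e"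
            using elim c1 by (auto simp: dist_norm)
          have eqd: "fs n w - f w = ((collatz_op (fs n) (csqrt w) - g (csqrt w))
                 + (collatz_op (fs n) (- csqrt w) - g (- csqrt w))) / 2"
            unfolding even_recover[OF fs wD, of n] f_def by (simp add: field_simps)
          have "norm (fs n w - f w) = norm ((collatz_op (fs n) (csqrt w) - g (csqrt w))
                 + (collatz_op (fs n) (- csqrt w) - g (- csqrt w))) / 2"
            by (subst eqd) (simp add: norm_divide)
          also have "\<dots> \<le> (norm (collatz_op (fs n) (csqrt w) - g (csqrt w))
                 + norm (collatz_op (fs n) (- csqrt w) - g (- csqrt w))) / 2"
            by (intro divide_right_mono norm_triangle_ineq) auto
          finally have "norm (fs n w - f w) \<le> (norm (collatz_op (fs n) (csqrt w) - g (csqrt w))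
                 + norm (collatz_op (fs n) (- csqrt w) - g (- csqrt w))) / 2" .
          then show "dist (fs n w) (f w) < e" using d1 d2 by (simp add: dist_norm)
        qed
      qed
    qed
  qed
  have fh: "f holomorphic_on unit_disk"
  proof (rule holo_local)
    fix s :: real assume s: "0 < s" "s < 1"
    have sub: "cball 0 s \<subseteq> unit_disk" using s by auto
    obtain "continuous_on (cball 0 s) f" "f holomorphic_on ball 0 s"
    proof (rule holomorphic_uniform_limit[OF _ ul[OF s]])
      show "\<forall>\<^sub>F n in sequentially. continuous_on (cball 0 s) (fs n) \<and> fs n holomorphic_on ball 0 s"
      proof (intro always_eventually allI conjI)
        fix n
        show "continuous_on (cball 0 s) (fs n)"
          by (rule continuous_on_subset[OF holomorphic_on_imp_continuous_on[OF fs] sub])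
        show "fs n holomorphic_on ball 0 s"
          by (rule holomorphic_on_subset[OF fs]) (use sub ball_subset_cball in blast)
      qed
    qed auto
    then show "f holomorphic_on ball 0 s" by simp
  qed
  have luc: "loc_unif_conv fs f"
    unfolding loc_unif_conv_def
  proof (intro allI impI)
    fix K assume K: "compact K \<and> K \<subseteq> unit_disk"
    obtain s where s: "0 < s" "s < 1" "K \<subseteq> cball 0 s" using compact_in_disk K by blast
    show "uniform_limit K fs f sequentially" by (rule uniform_limit_on_subset[OF ul[OF s(1,2)] s(3)])
  qed
  have c2: "loc_unif_conv (\<lambda>n. collatz_op (fs n)) (collatz_op f)"
    by (rule part2[OF fs fh luc])
  have "collatz_op f z = g z" if z: "z \<in> unit_disk" for z
  proof -
    have K: "compact {z} \<and> {z} \<subseteq> unit_disk" using z by simp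
    have "uniform_limit {z} (\<lambda>n. collatz_op (fs n)) g sequentially"
      using c K unfolding loc_unif_conv_def by blast
    from tendsto_uniform_limitI[OF this, of z]
    have t1: "(\<lambda>n. collatz_op (fs n) z) \<longlonglongrightarrow> g z" by simp
    have "uniform_limit {z} (\<lambda>n. collatz_op (fs n)) (collatz_op f) sequentially"
      using c2 K unfolding loc_unif_conv_def by blast
    from tendsto_uniform_limitI[OF this, of z]
    have t2: "(\<lambda>n. collatz_op (fs n) z) \<longlonglongrightarrow> collatz_op f z" by simp
    show ?thesis using LIMSEQ_unique[OF t2 t1] .
  qed
  then show ?thesis using fh by blast
qed



lemma sums_interleave:
  fixes e :: "nat \<Rightarrow> 'a::real_normed_vector"
  assumes E: "(\<lambda>n. e (2*n)) sums A" and O: "(\<lambda>n. e (2*n+1)) sums B"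
  shows "e sums (A + B)"
proof -
  define ee where "ee n = (if even n then e n else 0)" for n
  define eo where "eo n = (if odd n then e n else 0)" for n
  have sm1: "strict_mono (\<lambda>n::nat. 2*n)" by (auto simp: strict_mono_def)
  have sm2: "strict_mono (\<lambda>n::nat. 2*n+1)" by (auto simp: strict_mono_def)
  have "(\<lambda>n. ee (2*n)) sums A" using E by (simp add: ee_def)
  then have "ee sums A"
    by (subst (asm) sums_mono_reindex[OF sm1]) (auto simp: ee_def elim!: evenE)
  moreover have "(\<lambda>n. eo (2*n+1)) sums B" using O by (simp add: eo_def)
  then have "eo sums B"
    by (subst (asm) sums_mono_reindex[OF sm2]) (auto simp: eo_def elim!: oddE)
  ultimately have "(\<lambda>n. ee n + eo n) sums (A + B)" by (rule sums_add)
  moreover have "(\<lambda>n. ee n + eo n) = e" by (auto simp: ee_def eo_def)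
  ultimately show ?thesis by simp
qed

lemma summable_interleave:
  fixes e :: "nat \<Rightarrow> 'a::real_normed_vector"
  assumes E: "summable (\<lambda>n. e (2*n))" and O: "summable (\<lambda>n. e (2*n+1))"
  shows "summable e"
  using sums_interleave[OF summable_sums[OF E] summable_sums[OF O]] by (auto simp: summable_def)

lemma subseq_sum:
  fixes d :: "nat \<Rightarrow> real"
  assumes d0: "\<And>n. 0 \<le> d n" and sd: "summable d"
  shows "summable (\<lambda>k. d (3*k+2))" "(\<Sum>k. d (3*k+2)) \<le> suminf d"
proof -
  define g where "g k = 3*k+2" for k :: nat
  have sm: "strict_mono g" by (auto simp: strict_mono_def g_def)
  define d' where "d' n = (if n \<in> range g then d n else 0)" for n
  have z: "n \<notin> range g \<Longrightarrow> d' n = 0" for n by (simp add: d'_def)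
  have le: "d' n \<le> d n" for n using d0 by (simp add: d'_def)
  have d'0: "0 \<le> d' n" for n using d0 by (simp add: d'_def)
  have sd': "summable d'"
    by (rule summable_comparison_test[OF _ sd]) (use le d'0 in auto)
  have eq: "(\<lambda>k. d' (g k)) = (\<lambda>k. d (3*k+2))" by (auto simp: d'_def g_def)
  show "summable (\<lambda>k. d (3*k+2))"
    using summable_mono_reindex[OF sm, of d'] z sd' eq by simp
  have "(\<Sum>k. d (3*k+2)) = suminf d'"
    using suminf_mono_reindex[OF sm, of d'] z eq by simp
  also have "\<dots> \<le> suminf d" by (rule suminf_le[OF le sd' sd])
  finally show "(\<Sum>k. d (3*k+2)) \<le> suminf d" .
qed

lemma mean_series:
  fixes c :: "nat \<Rightarrow> complex"
  assumes r: "0 \<le> r" and sm: "summable (\<lambda>n. norm (c n) * r^n)"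
    and h: "\<And>t. h (of_real r * cis t) = (\<Sum>n. c n * (of_real r * cis t)^n)"
  shows "summable (\<lambda>n. (norm (c n))^2 * r^(2*n))"
    and "circle_mean2 h r = (\<Sum>n. (norm (c n))^2 * r^(2*n))"
proof -
  show "summable (\<lambda>n. (norm (c n))^2 * r^(2*n))" by (rule parseval(1)[OF r sm])
  have "circle_mean2 h r = 1/(2*pi) * integral {0..2*pi} (\<lambda>t. (cmod (\<Sum>n. c n * (of_real r * cis t)^n))^2)"
    unfolding circle_mean2_def h ..
  also have "\<dots> = (\<Sum>n. (norm (c n))^2 * r^(2*n))"
    unfolding parseval(2)[OF r sm] by simp
  finally show "circle_mean2 h r = (\<Sum>n. (norm (c n))^2 * r^(2*n))" .
qed

lemma odd_abs_summable:
  assumes f: "f holomorphic_on unit_disk" and z: "norm z < 1"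
  shows "summable (\<lambda>k. norm (taylor_coeff f (3*k+2) * z^(2*k+1)))"
proof -
  define \<rho> where "\<rho> = sqrt ((1 + norm z)/2)"
  have r: "0 < \<rho>" "\<rho> < 1" "norm z \<le> \<rho>^2" using rho_choice[of "norm z"] z by (auto simp: \<rho>_def)
  obtain B where B: "\<And>x. norm x \<le> \<rho> \<Longrightarrow> norm (f x) \<le> B" using bound_exists[OF f r(2)] by auto
  have sg: "summable (\<lambda>k. B * \<rho>^k)"
    using r by (intro summable_mult summable_geometric) auto
  show ?thesis
    by (rule summable_comparison_test[OF _ sg]) (use odd_term[OF f r(1,2) _ r(3)] B in auto)
qed

definition ccoef :: "(complex \<Rightarrow> complex) \<Rightarrow> nat \<Rightarrow> complex" where
  "ccoef f n = (if even n then taylor_coeff f (n div 2) else taylor_coeff f (3*(n div 2)+2))"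

lemma collatz_sums:
  assumes f: "f holomorphic_on unit_disk" and z: "z \<in> unit_disk"
  shows "(\<lambda>n. ccoef f n * z^n) sums collatz_op f z"
proof -
  have z2: "z^2 \<in> unit_disk" by (rule sq_disk[OF z])
  have E: "(\<lambda>n. ccoef f (2*n) * z^(2*n)) sums (\<Sum>n. taylor_coeff f n * z^(2*n))"
  proof -
    have "summable (\<lambda>n. taylor_coeff f n * (z^2)^n)" using tc_series[OF f z2] by (rule sums_summable)
    then show ?thesis by (simp add: ccoef_def power_mult summable_sums)
  qed
  have O: "(\<lambda>n. ccoef f (2*n+1) * z^(2*n+1)) sums (\<Sum>k. taylor_coeff f (3*k+2) * z^(2*k+1))"
  proof -
    have "summable (\<lambda>k. taylor_coeff f (3*k+2) * z^(2*k+1))" using odd_summable[OF f] z by simp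
    then show ?thesis by (simp add: ccoef_def summable_sums)
  qed
  show ?thesis using sums_interleave[OF E O] by (simp add: collatz_op_def)
qed

lemma collatz_abs:
  assumes f: "f holomorphic_on unit_disk" and r: "0 \<le> r" "r < 1"
  shows "summable (\<lambda>n. norm (ccoef f n) * r^n)"
proof (rule summable_interleave)
  have "complex_of_real (r^2) \<in> unit_disk" using r by (simp add: norm_power abs_square_less_1)
  from tc_abs[OF f this]
  show "summable (\<lambda>n. norm (ccoef f (2*n)) * r^(2*n))"
    using r by (simp add: ccoef_def power_mult norm_power)
  have "norm (complex_of_real r) < 1" using r by simp
  from odd_abs_summable[OF f this]
  show "summable (\<lambda>n. norm (ccoef f (2*n+1)) * r^(2*n+1))"
    using r by (simp add: ccoef_def norm_mult norm_power)
qed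

lemma mean_f:
  assumes f: "f holomorphic_on unit_disk" and r: "0 \<le> r" "r < 1"
  shows "summable (\<lambda>n. (norm (taylor_coeff f n))^2 * r^(2*n))"
    and "circle_mean2 f r = (\<Sum>n. (norm (taylor_coeff f n))^2 * r^(2*n))"
proof -
  have rD: "complex_of_real r \<in> unit_disk" using r by simp
  have sm: "summable (\<lambda>n. norm (taylor_coeff f n) * r^n)" using tc_abs[OF f rD] r by simp
  have h: "f (of_real r * cis t) = (\<Sum>n. taylor_coeff f n * (of_real r * cis t)^n)" for t
  proof -
    have "of_real r * cis t \<in> unit_disk" using r by (simp add: norm_mult)
    from tc_series[OF f this] show ?thesis by (simp add: sums_iff)
  qed
  show "summable (\<lambda>n. (norm (taylor_coeff f n))^2 * r^(2*n))" by (rule mean_series(1)[OF r(1) sm h])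
  show "circle_mean2 f r = (\<Sum>n. (norm (taylor_coeff f n))^2 * r^(2*n))" by (rule mean_series(2)[OF r(1) sm h])
qed

lemma mean_Ff:
  assumes f: "f holomorphic_on unit_disk" and r: "0 \<le> r" "r < 1"
  shows "summable (\<lambda>n. (norm (ccoef f n))^2 * r^(2*n))"
    and "circle_mean2 (collatz_op f) r = (\<Sum>n. (norm (ccoef f n))^2 * r^(2*n))"
proof -
  have sm: "summable (\<lambda>n. norm (ccoef f n) * r^n)" by (rule collatz_abs[OF f r])
  have h: "collatz_op f (of_real r * cis t) = (\<Sum>n. ccoef f n * (of_real r * cis t)^n)" for t
  proof -
    have "of_real r * cis t \<in> unit_disk" using r by (simp add: norm_mult)
    from collatz_sums[OF f this] show ?thesis by (simp add: sums_iff)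
  qed
  show "summable (\<lambda>n. (norm (ccoef f n))^2 * r^(2*n))" by (rule mean_series(1)[OF r(1) sm h])
  show "circle_mean2 (collatz_op f) r = (\<Sum>n. (norm (ccoef f n))^2 * r^(2*n))" by (rule mean_series(2)[OF r(1) sm h])
qed

lemma G1:
  fixes d :: "nat \<Rightarrow> real"
  assumes d0: "\<And>n. 0 \<le> d n"
    and h: "\<And>r. 0 \<le> r \<Longrightarrow> r < 1 \<Longrightarrow> summable (\<lambda>n. d n * r^(2*n)) \<and> (\<Sum>n. d n * r^(2*n)) \<le> M"
  shows "summable d \<and> suminf d \<le> M"
proof -
  have ps: "(\<Sum>n<N. d n) \<le> M" for N
  proof -
    have ev: "eventually (\<lambda>r. (\<Sum>n<N. d n * r^(2*n)) \<le> M) (at_left (1::real))"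
    proof -
      have "eventually (\<lambda>r. r \<in> {0<..<1}) (at_left (1::real))"
        by (rule eventually_at_left_real) simp
      then show ?thesis
      proof eventually_elim
        case (elim r)
        then have r: "0 \<le> r" "r < 1" by auto
        have "(\<Sum>n<N. d n * r^(2*n)) \<le> (\<Sum>n. d n * r^(2*n))"
          by (rule sum_le_suminf) (use h[OF r] d0 r in auto)
        also have "\<dots> \<le> M" using h[OF r] by simp
        finally show ?case .
      qed
    qed
    have t: "((\<lambda>r. \<Sum>n<N. d n * r^(2*n)) \<longlongrightarrow> (\<Sum>n<N. d n * 1^(2*n))) (at_left (1::real))"
      by (intro tendsto_intros)
    show ?thesis using tendsto_upperbound[OF t ev] by simp
  qed
  have sd: "summable d" by (rule summableI_nonneg_bounded[OF d0 ps])
  moreover have "suminf d \<le> M" by (rule suminf_le_const[OF sd ps])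
  ultimately show ?thesis by simp
qed

lemma G2:
  fixes d :: "nat \<Rightarrow> real"
  assumes d0: "\<And>n. 0 \<le> d n" and sd: "summable d" and r: "0 \<le> r" "r \<le> 1"
  shows "(\<Sum>n. d n * r^(2*n)) \<le> suminf d"
proof -
  have le: "d n * r^(2*n) \<le> d n" for n
    using d0 r by (intro mult_left_le) (auto simp: power_le_one)
  have s: "summable (\<lambda>n. d n * r^(2*n))"
    by (rule summable_comparison_test[OF _ sd]) (use le d0 r in auto)
  show ?thesis by (rule suminf_le[OF le s sd])
qed

lemma G:
  fixes d :: "nat \<Rightarrow> real" and m :: "real \<Rightarrow> real"
  assumes d0: "\<And>n. 0 \<le> d n"
    and h: "\<And>r. 0 \<le> r \<Longrightarrow> r < 1 \<Longrightarrow> summable (\<lambda>n. d n * r^(2*n)) \<and> m r = (\<Sum>n. d n * r^(2*n))"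
  shows "bdd_above (m ` {0..<1}) \<longleftrightarrow> summable d"
    and "summable d \<Longrightarrow> (SUP r\<in>{0..<1}. m r) = suminf d"
proof -
  show "bdd_above (m ` {0..<1}) \<longleftrightarrow> summable d"
  proof
    assume "bdd_above (m ` {0..<1})"
    then obtain M where "\<forall>x\<in>{0..<1}. m x \<le> M" by (auto simp: bdd_above_def)
    then have M: "\<And>r. r \<in> {0..<1} \<Longrightarrow> m r \<le> M" by auto
    show "summable d" using G1[OF d0, where M=M] h M by auto
  next
    assume sd: "summable d"
    show "bdd_above (m ` {0..<1})"
      by (rule bdd_aboveI[where M="suminf d"]) (use h G2[OF d0 sd] in auto)
  qed
  assume sd: "summable d"
  have bdd: "bdd_above (m ` {0..<1})"
    by (rule bdd_aboveI[where M="suminf d"]) (use h G2[OF d0 sd] in auto)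
  show "(SUP r\<in>{0..<1}. m r) = suminf d"
  proof (rule antisym)
    show "(SUP r\<in>{0..<1}. m r) \<le> suminf d"
      by (rule cSUP_least) (use h G2[OF d0 sd] in auto)
    have "m r \<le> (SUP r\<in>{0..<1}. m r)" if "0 \<le> r" "r < 1" for r
      by (rule cSUP_upper[OF _ bdd]) (use that in auto)
    then show "suminf d \<le> (SUP r\<in>{0..<1}. m r)"
      using G1[OF d0, where M="SUP r\<in>{0..<1}. m r"] h by auto
  qed
qed

lemma part5:
  assumes H: "in_H2 f"
  shows "in_H2 (collatz_op f) \<and> H2_norm (collatz_op f) \<le> sqrt 2 * H2_norm f
              \<and> H2_norm f \<le> H2_norm (collatz_op f)"
proof -
  have f: "f holomorphic_on unit_disk" and bf: "bdd_above (circle_mean2 f ` {0..<1})"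
    using H by (auto simp: in_H2_def)
  define a where "a n = (norm (taylor_coeff f n))^2" for n
  define d where "d n = (norm (ccoef f n))^2" for n
  have a0: "0 \<le> a n" for n by (simp add: a_def)
  have d0: "0 \<le> d n" for n by (simp add: d_def)
  have Gf: "summable (\<lambda>n. a n * r^(2*n)) \<and> circle_mean2 f r = (\<Sum>n. a n * r^(2*n))"
    if "0 \<le> r" "r < 1" for r using mean_f[OF f that] by (simp add: a_def)
  have GF: "summable (\<lambda>n. d n * r^(2*n)) \<and> circle_mean2 (collatz_op f) r = (\<Sum>n. d n * r^(2*n))"
    if "0 \<le> r" "r < 1" for r using mean_Ff[OF f that] by (simp add: d_def)
  have sa: "summable a" using G(1)[OF a0 Gf] bf by simp
  have SA: "(SUP r\<in>{0..<1}. circle_mean2 f r) = suminf a" using G(2)[OF a0 Gf sa] by simp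
  define B where "B = (\<Sum>k. a (3*k+2))"
  have sB: "summable (\<lambda>k. a (3*k+2))" and BA: "B \<le> suminf a"
    using subseq_sum[OF a0 sa] by (auto simp: B_def)
  have B0: "0 \<le> B" unfolding B_def by (rule suminf_nonneg[OF sB]) (simp add: a0)
  have e1: "(\<lambda>n. d (2*n)) = a" by (auto simp: d_def a_def ccoef_def)
  have e2: "(\<lambda>n. d (2*n+1)) = (\<lambda>k. a (3*k+2))" by (auto simp: d_def a_def ccoef_def)
  have dE: "(\<lambda>n. d (2*n)) sums suminf a"
    unfolding e1 by (rule summable_sums[OF sa])
  have dO: "(\<lambda>n. d (2*n+1)) sums B"
    unfolding e2 B_def by (rule summable_sums[OF sB])
  have dsum: "d sums (suminf a + B)" by (rule sums_interleave[OF dE dO])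
  then have sd: "summable d" by (auto simp: summable_def)
  have SF: "(SUP r\<in>{0..<1}. circle_mean2 (collatz_op f) r) = suminf a + B"
    using G(2)[OF d0 GF sd] sums_unique[OF dsum] by simp
  have bF: "bdd_above (circle_mean2 (collatz_op f) ` {0..<1})" using G(1)[OF d0 GF] sd by simp
  have inF: "in_H2 (collatz_op f)" unfolding in_H2_def using part1[OF f] bF by simp
  have nf: "H2_norm f = sqrt (suminf a)" unfolding H2_norm_def SA ..
  have nF: "H2_norm (collatz_op f) = sqrt (suminf a + B)" unfolding H2_norm_def SF ..
  have "sqrt (suminf a + B) \<le> sqrt (2 * suminf a)" using BA by simp
  also have "\<dots> = sqrt 2 * sqrt (suminf a)" by (simp add: real_sqrt_mult)
  finally have i1: "H2_norm (collatz_op f) \<le> sqrt 2 * H2_norm f" using nf nF by simp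
  have i2: "H2_norm f \<le> H2_norm (collatz_op f)" using nf nF B0 by simp
  show ?thesis using inF i1 i2 by simp
qed


theorem mainTheorem6:
  shows "(\<forall>f. f holomorphic_on unit_disk \<longrightarrow> collatz_op f holomorphic_on unit_disk)
   \<and> (\<forall>fs f. (\<forall>n. fs n holomorphic_on unit_disk) \<and> f holomorphic_on unit_disk
              \<and> loc_unif_conv fs f \<longrightarrow> loc_unif_conv (\<lambda>n. collatz_op (fs n)) (collatz_op f))
   \<and> (\<forall>f g. f holomorphic_on unit_disk \<and> g holomorphic_on unit_disk
              \<and> (\<forall>z\<in>unit_disk. collatz_op f z = collatz_op g z) \<longrightarrow> (\<forall>z\<in>unit_disk. f z = g z))
   \<and> (\<forall>fs g. (\<forall>n. fs n holomorphic_on unit_disk) \<and> loc_unif_conv (\<lambda>n. collatz_op (fs n)) g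
              \<longrightarrow> (\<exists>f. f holomorphic_on unit_disk \<and> (\<forall>z\<in>unit_disk. collatz_op f z = g z)))
   \<and> (\<forall>f. in_H2 f \<longrightarrow> in_H2 (collatz_op f)
              \<and> H2_norm (collatz_op f) \<le> sqrt 2 * H2_norm f
              \<and> H2_norm f \<le> H2_norm (collatz_op f))"
    using part1 part2 part3 part4 part5 by blast

end
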